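(* Let $\mathit{pts}_1,\ldots,\mathit{pts}_n \in \mathit{PTS}$ be points-to types and let $q_1,\ldots,q_n \in [0,1]$ satisfy $q_1+\cdots+q_n \le 1$. Then the map $\nabla((\mathit{pts}_1,q_1),\ldots,(\mathit{pts}_n,q_n)) : \mathit{Var} \to 2^{\mathit{Addrs}_p}$ is a points-to type, i.e. it belongs to $\mathit{PTS}$.
   Context: $\mathit{Var}$ is a finite set of program variables. $\mathit{Addrs}=\{x' \mid x\in\mathit{Var}\}$ is a set of symbolic addresses (one per variable) and $\mathit{Addrs}_p=\mathit{Addrs}\times[0,1]$. $\textit{Pre-PTS}$ is the set of maps $\mathit{pts}:\mathit{Var}\to 2^{\mathit{Addrs}_p}$ such that for all $x,y\in\mathit{Var}$, if $(y',p_1),(y',p_2)\in\mathit{pts}(x)$ then $p_1=p_2$. For $\mathit{pts}\in\textit{Pre-PTS}$ and $x\in\mathit{Var}$, $\sum_{\mathit{pts}} x=\sum_{(z',p)\in\mathit{pts}(x)} p$ and $A_{\mathit{pts}}(x)=\{z'\mid \exists p>0.\ (z',p)\in\mathit{pts}(x)\}$. The set of points-to types is $\mathit{PTS}=\{\mathit{pts}\in\textit{Pre-PTS}\mid \forall x\in\mathit{Var}.\ \sum_{\mathit{pts}} x\le 1\}$. For $\mathit{pts}_1,\ldots,\mathit{pts}_n\in\mathit{PTS}$ and weights $q_1,\ldots,q_n\in[0,1]$ with sum $\le 1$, the map $\nabla((\mathit{pts}_1,q_1),\ldots,(\mathit{pts}_n,q_n))$ is defined by $\nabla((\mathit{pts}_1,q_1),\ldots,(\mathit{pts}_n,q_n))(x)=\{(z',p)\mid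 (\exists i.\ z'\in A_{\mathit{pts}_i}(x))\wedge p=\sum_{k:\ (z',p_k)\in\mathit{pts}_k(x)} q_k\, p_k\}$. *)

theory Defs
  imports Complex_Main
begin

text \<open>Program variables form a finite type 'v.  The symbolic address x' of a
variable x is Addr x; so Addrs = range Addr (one address per variable).\<close>

datatype 'v addr = Addr 'v

definition Addrs_p :: "('v addr \<times> real) set" where
  "Addrs_p = {(a, p). a \<in> range Addr \<and> 0 \<le> p \<and> p \<le> 1}"

type_synonym 'v ptsmap = "'v \<Rightarrow> ('v addr \<times> real) set"

definition Pre_PTS :: "('v::finite) ptsmap set" where
  "Pre_PTS = {pts. (\<forall>x. pts x \<subseteq> Addrs_p) \<and>
     (\<forall>x y p1 p2. (Addr y, p1) \<in> pts x \<and> (Addr y, p2) \<in> pts x \<longrightarrow> p1 = p2)}"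

definition sum_pts :: "('v::finite) ptsmap \<Rightarrow> 'v \<Rightarrow> real" where
  "sum_pts pts x = (\<Sum>(z, p)\<in>pts x. p)"

definition A_pts :: "('v::finite) ptsmap \<Rightarrow> 'v \<Rightarrow> 'v addr set" where
  "A_pts pts x = {z. \<exists>p>0. (z, p) \<in> pts x}"

definition PTS :: "('v::finite) ptsmap set" where
  "PTS = {pts \<in> Pre_PTS. \<forall>x. sum_pts pts x \<le> 1}"

definition nabla :: "nat \<Rightarrow> (nat \<Rightarrow> ('v::finite) ptsmap) \<Rightarrow> (nat \<Rightarrow> real) \<Rightarrow> 'v ptsmap" where
  "nabla n pts q x = {(z, p). (\<exists>i\<in>{1..n}. z \<in> A_pts (pts i) x) \<and>
      p = (\<Sum>(k, pk)\<in>{(k, pk). k \<in> {1..n} \<and> (z, pk) \<in> pts k x}. q k * pk)}"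

end

theory Submission
  imports Defs
begin

definition fv :: "('v addr \<times> real) set \<Rightarrow> 'v addr \<Rightarrow> real" where
  "fv P z = (if \<exists>p. (z,p) \<in> P then (THE p. (z,p) \<in> P) else 0)"

definition uniq :: "('v addr \<times> real) set \<Rightarrow> bool" where
  "uniq P = (\<forall>z p1 p2. (z,p1) \<in> P \<and> (z,p2) \<in> P \<longrightarrow> p1 = p2)"

lemma fv_eq: "uniq P \<Longrightarrow> (z,p) \<in> P \<Longrightarrow> fv P z = p"
  unfolding fv_def uniq_def by (auto intro: the_equality)

lemma fv_out: "\<not>(\<exists>p. (z,p) \<in> P) \<Longrightarrow> fv P z = 0"
  unfolding fv_def by auto

lemma P_img: "uniq P \<Longrightarrow> P = (\<lambda>z. (z, fv P z)) ` (fst ` P)"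
  using fv_eq by (force simp: image_iff)

lemma all_range: "(a::'v addr) \<in> range Addr" by (cases a) auto

lemma fin_addr: "finite (range (Addr :: 'v::finite \<Rightarrow> 'v addr))"
  by simp

lemma fin_P: "uniq P \<Longrightarrow> finite (P :: ('v::finite addr \<times> real) set)"
proof -
  assume u: "uniq P"
  have "fst ` P \<subseteq> range Addr" by (auto simp: all_range)
  hence "finite (fst ` P)" using fin_addr finite_subset by blast
  thus ?thesis using P_img[OF u] by (metis finite_imageI)
qed

lemma sum_P: "uniq P \<Longrightarrow> (\<Sum>(z,p)\<in>(P :: ('v::finite addr \<times> real) set). p)
   = (\<Sum>z\<in>range Addr. fv P z)"
proof -
  assume u: "uniq P"
  have "(\<Sum>(z,p)\<in>P. p) = (\<Sum>(z,p)\<in>(\<lambda>z. (z, fv P z)) ` (fst ` P). p)"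
    using P_img[OF u] by simp
  also have "\<dots> = (\<Sum>z\<in>fst ` P. fv P z)"
    by (subst sum.reindex) (auto simp: inj_on_def)
  also have "\<dots> = (\<Sum>z\<in>range Addr. fv P z)"
  proof (rule sum.mono_neutral_left)
    show "finite (range (Addr :: 'v \<Rightarrow> _))" by simp
    show "fst ` P \<subseteq> range Addr" by (auto simp: all_range)
    show "\<forall>i\<in>range Addr - fst ` P. fv P i = 0"
      by (auto intro!: fv_out simp: image_iff) (metis fst_conv)
  qed
  finally show ?thesis .
qed

lemma pre_uniq: "pts \<in> Pre_PTS \<Longrightarrow> uniq (pts x)"
  unfolding uniq_def
proof (intro allI impI)
  fix z p1 p2 assume a: "pts \<in> Pre_PTS" "(z, p1) \<in> pts x \<and> (z, p2) \<in> pts x"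
  obtain y where "z = Addr y" by (cases z)
  thus "p1 = p2" using a unfolding Pre_PTS_def by blast
qed

lemma pre_sub: "pts \<in> Pre_PTS \<Longrightarrow> (z,p) \<in> pts x \<Longrightarrow> 0 \<le> p \<and> p \<le> 1"
  unfolding Pre_PTS_def Addrs_p_def by auto

lemma fv_nonneg: "pts \<in> Pre_PTS \<Longrightarrow> 0 \<le> fv (pts x) z \<and> fv (pts x) z \<le> 1"
  by (cases "\<exists>p. (z,p) \<in> pts x") (auto simp: fv_out dest: pre_sub fv_eq[OF pre_uniq])

theorem lemma1:
  fixes n :: nat and pts :: "nat \<Rightarrow> ('v::finite) ptsmap" and q :: "nat \<Rightarrow> real"
  assumes "\<forall>i\<in>{1..n}. pts i \<in> PTS"
    and "\<forall>i\<in>{1..n}. 0 \<le> q i \<and> q i \<le> 1"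
    and "(\<Sum>i=1..n. q i) \<le> 1"
  shows "nabla n pts q \<in> PTS"
proof -
  have pre: "\<And>i. i \<in> {1..n} \<Longrightarrow> pts i \<in> Pre_PTS" using assms(1) unfolding PTS_def by auto
  have sm: "\<And>i x. i \<in> {1..n} \<Longrightarrow> sum_pts (pts i) x \<le> 1" using assms(1) unfolding PTS_def by auto
  define g where "g x z = (\<Sum>k\<in>{1..n}. q k * fv (pts k x) z)" for x z
  define Z where "Z x = {z. \<exists>i\<in>{1..n}. z \<in> A_pts (pts i) x}" for x
  have inner: "(\<Sum>(k, pk)\<in>{(k, pk). k \<in> {1..n} \<and> (z, pk) \<in> pts k x}. q k * pk) = g x z" for x z
  proof -
    let ?K = "{k\<in>{1..n}. \<exists>p. (z,p) \<in> pts k x}"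
    have "{(k, pk). k \<in> {1..n} \<and> (z, pk) \<in> pts k x} = (\<lambda>k. (k, fv (pts k x) z)) ` ?K"
      using fv_eq[OF pre_uniq[OF pre]] by (force simp: image_iff)
    hence "(\<Sum>(k, pk)\<in>{(k, pk). k \<in> {1..n} \<and> (z, pk) \<in> pts k x}. q k * pk)
        = (\<Sum>k\<in>?K. q k * fv (pts k x) z)"
      by (simp add: sum.reindex inj_on_def)
    also have "\<dots> = g x z" unfolding g_def
      by (rule sum.mono_neutral_left) (auto simp: fv_out)
    finally show ?thesis .
  qed
  have nab: "nabla n pts q x = (\<lambda>z. (z, g x z)) ` Z x" for x
    unfolding nabla_def Z_def using inner by auto
  have gnn: "0 \<le> g x z" for x z
    unfolding g_def using assms(2) fv_nonneg[OF pre] by (auto intro!: sum_nonneg)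
  have sumfv: "(\<Sum>z\<in>S. fv (pts k x) z) \<le> 1" if "k \<in> {1..n}" "S \<subseteq> range Addr" for k x S
  proof -
    have "(\<Sum>z\<in>S. fv (pts k x) z) \<le> (\<Sum>z\<in>range Addr. fv (pts k x) z)"
      using that fv_nonneg[OF pre[OF that(1)]] by (intro sum_mono2) auto
    also have "\<dots> = sum_pts (pts k) x"
      unfolding sum_pts_def using sum_P[OF pre_uniq[OF pre[OF that(1)]]] by simp
    also have "\<dots> \<le> 1" using sm that by auto
    finally show ?thesis .
  qed
  have Zsub: "Z x \<subseteq> range Addr" for x by (auto simp: all_range)
  have gle: "(\<Sum>z\<in>S. g x z) \<le> 1" if "S \<subseteq> range Addr" for x S
  proof -
    have "(\<Sum>z\<in>S. g x z) = (\<Sum>z\<in>S. \<Sum>k\<in>{1..n}. q k * fv (pts k x) z)"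
      by (simp add: g_def)
    also have "\<dots> = (\<Sum>k\<in>{1..n}. \<Sum>z\<in>S. q k * fv (pts k x) z)"
      by (rule sum.swap)
    also have "\<dots> = (\<Sum>k\<in>{1..n}. q k * (\<Sum>z\<in>S. fv (pts k x) z))"
      by (simp only: sum_distrib_left)
    also have "\<dots> \<le> (\<Sum>k\<in>{1..n}. q k)"
    proof (rule sum_mono)
      fix k assume k: "k \<in> {1..n}"
      show "q k * (\<Sum>z\<in>S. fv (pts k x) z) \<le> q k"
        using mult_left_le[OF sumfv[OF k that]] assms(2) k by blast
    qed
    also have "\<dots> \<le> 1" using assms(3) by simp
    finally show ?thesis .
  qed
  have "nabla n pts q \<in> Pre_PTS"
    unfolding Pre_PTS_def
  proof (intro CollectI conjI allI impI)
    fix x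
    show "nabla n pts q x \<subseteq> Addrs_p"
    proof
      fix a assume "a \<in> nabla n pts q x"
      then obtain z where z: "z \<in> Z x" "a = (z, g x z)" using nab by auto
      have "g x z = (\<Sum>z\<in>{z}. g x z)" by simp
      also have "\<dots> \<le> 1" using Zsub z by (intro gle) auto
      finally show "a \<in> Addrs_p" using z gnn unfolding Addrs_p_def
        by (auto simp: all_range)
    qed
  next
    fix x y p1 p2
    assume "(Addr y, p1) \<in> nabla n pts q x \<and> (Addr y, p2) \<in> nabla n pts q x"
    thus "p1 = p2" using nab by auto
  qed
  moreover have "sum_pts (nabla n pts q) x \<le> 1" for x
  proof -
    have "sum_pts (nabla n pts q) x = (\<Sum>(z,p)\<in>(\<lambda>z. (z, g x z)) ` Z x. p)"
      unfolding sum_pts_def nab ..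
    also have "\<dots> = (\<Sum>z\<in>Z x. g x z)"
      by (subst sum.reindex) (auto simp: inj_on_def)
    also have "\<dots> \<le> 1" by (rule gle[OF Zsub])
    finally show ?thesis .
  qed
  ultimately show ?thesis unfolding PTS_def by auto
qed

end
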